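(* For every instance of a rule of $\mathsf{G4iSLt}$ with conclusion $S_0$ and premises $S_1,\dots,S_n$, we have $\Theta(S_i)\prec\Theta(S_0)$ for every $1\le i\le n$, where $\prec$ is the shortlex order.
   Context: Formulas are built by the grammar $\varphi ::= p \mid \bot \mid \varphi\land\varphi \mid \varphi\lor\varphi \mid \varphi\to\varphi \mid \Box\varphi$, with $p$ ranging over a countably infinite set of propositional variables. For a multiset $\Gamma$, $\Box\Gamma=\{\Box\psi:\psi\in\Gamma\}$; a boxed formula is one of the form $\Box\psi$. Weight: $w(\bot)=w(p)=1$; $w(\psi\lor\chi)=w(\psi\to\chi)=w(\psi)+w(\chi)+1$; $w(\psi\land\chi)=w(\psi)+w(\chi)+2$; $w(\Box\psi)=w(\psi)+1$. For a finite multiset $\Delta$ of formulas whose maximal weight is $n$, let $L(\Delta)$ be the list $[c_n,c_{n-1},\dots,c_1]$ of natural numbers of length $n$ where $c_m$ is the number of occurrences in $\Delta$ of formulas of weight $m$ (so the leftmost entry counts formulas of maximal weight; $L$ of the empty multiset is the empty list). For a sequent $\Gamma\Rightarrow\chi$, write $\Gamma=\Gamma_0,\Box\Gamma_1$ where $\Gamma_0$ contains no boxed formula, and set $\Theta(\Gamma\Rightarrow\chi)=L(\Gamma_0\uplus\Gamma_1\uplus\{\chi\})$ (the antecedent's outermost boxes are removed). The shortlex order on lists of natural numbers: $l_0\prec l_1$ iff either $\mathrm{length}(l_0)<\mathrm{length}(l_1)$, or the lengths are equal and $l_0$ is lexicographically smaller than $l_1$ (i.e. at the first position $j$ where they differ,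 the entry of $l_0$ is smaller). A sequent is $\Gamma\Rightarrow\chi$ with $\Gamma$ a finite multiset of formulas and $\chi$ a formula. The sequent calculus $\mathsf{G4iSLt}$ has the following rules, where $p$ is a propositional variable and $\Phi$ always denotes a multiset containing no boxed formula: (⊥L) $\bot,\Gamma\Rightarrow\chi$ (no premise); (IdP) $\Gamma,p\Rightarrow p$ (no premise); (∧L) from $\Gamma,\varphi,\psi\Rightarrow\chi$ infer $\Gamma,\varphi\land\psi\Rightarrow\chi$; (∧R) from $\Gamma\Rightarrow\varphi$ and $\Gamma\Rightarrow\psi$ infer $\Gamma\Rightarrow\varphi\land\psi$; (∨L) from $\Gamma,\varphi\Rightarrow\chi$ and $\Gamma,\psi\Rightarrow\chi$ infer $\Gamma,\varphi\lor\psi\Rightarrow\chi$; (∨R$_i$), $i\in\{1,2\}$: from $\Gamma\Rightarrow\varphi_i$ infer $\Gamma\Rightarrow\varphi_1\lor\varphi_2$; (p→L) from $\Gamma,p,\varphi\Rightarrow\chi$ infer $\Gamma,p,p\to\varphi\Rightarrow\chi$; (→R) from $\Gamma,\varphi\Rightarrow\psi$ infer $\Gamma\Rightarrow\varphi\to\psi$; (□→L) from $\Phi,\Gamma,\psi,\Box\varphi\Rightarrow\varphi$ and $\Phi,\Box\Gamma,\psi\Rightarrow\chi$ infer $\Phi,\Box\Gamma,\Box\varphi\to\psi\Rightarrow\chi$; (SLtR) from $\Phi,\Gamma,\Box\varphi\Rightarrow\varphi$ infer $\Phi,\Box\Gamma\Rightarrow\Box\varphi$; (∧→L) from $\Gamma,\varphi\to(\psi\to\chi)\Rightarrow\delta$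 infer $\Gamma,(\varphi\land\psi)\to\chi\Rightarrow\delta$; (∨→L) from $\Gamma,\varphi\to\chi,\psi\to\chi\Rightarrow\delta$ infer $\Gamma,(\varphi\lor\psi)\to\chi\Rightarrow\delta$; (→→L) from $\Gamma,\psi\to\chi\Rightarrow\varphi\to\psi$ and $\Gamma,\chi\Rightarrow\delta$ infer $\Gamma,(\varphi\to\psi)\to\chi\Rightarrow\delta$. *)

theory Defs
  imports Main "HOL-Library.Multiset"
begin

datatype form = Var nat | Bot | And form form | Or form form | Imp form form | Box form

fun w :: "form \<Rightarrow> nat" where
  "w Bot = 1"
| "w (Var p) = 1"
| "w (Or a b) = w a + w b + 1"
| "w (Imp a b) = w a + w b + 1"
| "w (And a b) = w a + w b + 2"
| "w (Box a) = w a + 1"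

fun is_box :: "form \<Rightarrow> bool" where
  "is_box (Box _) = True"
| "is_box _ = False"

fun unbox :: "form \<Rightarrow> form" where
  "unbox (Box a) = a"
| "unbox a = a"

definition no_box :: "form multiset \<Rightarrow> bool" where
  "no_box \<Phi> \<longleftrightarrow> (\<forall>a \<in># \<Phi>. \<not> is_box a)"

type_synonym sequent = "form multiset \<times> form"

definition L :: "form multiset \<Rightarrow> nat list" where
  "L \<Delta> = (if \<Delta> = {#} then []
     else map (\<lambda>m. size (filter_mset (\<lambda>a. w a = m) \<Delta>))
              (rev [1..<Max (w ` set_mset \<Delta>) + 1]))"

definition Theta :: "sequent \<Rightarrow> nat list" where
  "Theta S = (case S of (\<Gamma>, \<chi>) \<Rightarrow>
     L (filter_mset (\<lambda>a. \<not> is_box a) \<Gamma>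
        + image_mset unbox (filter_mset is_box \<Gamma>) + {#\<chi>#}))"

definition shortlex :: "nat list \<Rightarrow> nat list \<Rightarrow> bool" where
  "shortlex l0 l1 \<longleftrightarrow> length l0 < length l1 \<or>
     (length l0 = length l1 \<and>
      (\<exists>j < length l0. take j l0 = take j l1 \<and> l0 ! j < l1 ! j))"

inductive rule :: "sequent list \<Rightarrow> sequent \<Rightarrow> bool" where
  BotL: "rule [] (add_mset Bot \<Gamma>, \<chi>)"
| IdP: "rule [] (add_mset (Var p) \<Gamma>, Var p)"
| AndL: "rule [(\<Gamma> + {#\<phi>, \<psi>#}, \<chi>)] (add_mset (And \<phi> \<psi>) \<Gamma>, \<chi>)"
| AndR: "rule [(\<Gamma>, \<phi>), (\<Gamma>, \<psi>)] (\<Gamma>, And \<phi> \<psi>)"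
| OrL: "rule [(add_mset \<phi> \<Gamma>, \<chi>), (add_mset \<psi> \<Gamma>, \<chi>)] (add_mset (Or \<phi> \<psi>) \<Gamma>, \<chi>)"
| OrR1: "rule [(\<Gamma>, \<phi>)] (\<Gamma>, Or \<phi> \<psi>)"
| OrR2: "rule [(\<Gamma>, \<psi>)] (\<Gamma>, Or \<phi> \<psi>)"
| pImpL: "rule [(\<Gamma> + {#Var p, \<phi>#}, \<chi>)] (\<Gamma> + {#Var p, Imp (Var p) \<phi>#}, \<chi>)"
| ImpR: "rule [(add_mset \<phi> \<Gamma>, \<psi>)] (\<Gamma>, Imp \<phi> \<psi>)"
| BoxImpL: "no_box \<Phi> \<Longrightarrow>
    rule [(\<Phi> + \<Gamma> + {#\<psi>, Box \<phi>#}, \<phi>), (\<Phi> + image_mset Box \<Gamma> + {#\<psi>#}, \<chi>)]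
         (\<Phi> + image_mset Box \<Gamma> + {#Imp (Box \<phi>) \<psi>#}, \<chi>)"
| SLtR: "no_box \<Phi> \<Longrightarrow>
    rule [(\<Phi> + \<Gamma> + {#Box \<phi>#}, \<phi>)] (\<Phi> + image_mset Box \<Gamma>, Box \<phi>)"
| AndImpL: "rule [(add_mset (Imp \<phi> (Imp \<psi> \<chi>)) \<Gamma>, \<delta>)] (add_mset (Imp (And \<phi> \<psi>) \<chi>) \<Gamma>, \<delta>)"
| OrImpL: "rule [(\<Gamma> + {#Imp \<phi> \<chi>, Imp \<psi> \<chi>#}, \<delta>)] (add_mset (Imp (Or \<phi> \<psi>) \<chi>) \<Gamma>, \<delta>)"
| ImpImpL: "rule [(add_mset (Imp \<psi> \<chi>) \<Gamma>, Imp \<phi> \<psi>), (add_mset \<chi> \<Gamma>, \<delta>)]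
                 (add_mset (Imp (Imp \<phi> \<psi>) \<chi>) \<Gamma>, \<delta>)"

end

theory Submission
  imports Defs "HOL-Library.Multiset_Order"
begin

definition Lc :: "nat multiset \<Rightarrow> nat list" where
  "Lc M = (if M = {#} then [] else map (count M) (rev [1..<Max (set_mset M) + 1]))"

lemma size_filter_w: "size (filter_mset (\<lambda>a. w a = m) D) = count (image_mset w D) m"
  by (induction D) auto

lemma L_Lc: "L D = Lc (image_mset w D)"
  unfolding L_def Lc_def by (simp add: size_filter_w)

lemma rev_nth_aux: "i < b \<Longrightarrow> rev [1..<b+1] ! i = b - i"
proof -
  assume "i < b"
  then have "rev [1..<b+1] ! i = [1..<b+1] ! (b - Suc i)"
    by (simp add: rev_nth del: upt_Suc)
  also have "\<dots> = b - i" using \<open>i < b\<close> by (simp del: upt_Suc)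
  finally show ?thesis .
qed

lemma rev_nth_aux2: "i < b \<Longrightarrow> rev [Suc 0..<Suc b] ! i = b - i"
  using rev_nth_aux by simp

lemma Lc_main:
  fixes M N :: "nat multiset"
  assumes lt: "M < N" and M0: "0 \<notin># M" and N0: "0 \<notin># N"
  shows "shortlex (Lc M) (Lc N)"
proof -
  have Nne: "N \<noteq> {#}" using lt by auto
  define b where "b = Max (set_mset N)"
  have bN: "b \<in># N" using Nne b_def by simp
  have b1: "b \<ge> 1" using bN N0 by (cases b) auto
  have lenN: "length (Lc N) = b" using Nne b_def Lc_def by simp
  show ?thesis
  proof (cases "M = {#}")
    case True
    then show ?thesis using lenN b1 by (simp add: shortlex_def Lc_def)
  next
    case Mne: False
    define a where "a = Max (set_mset M)"
    have aM: "a \<in># M" using Mne a_def by simp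
    have lenM: "length (Lc M) = a" using Mne a_def Lc_def by simp
    define D where "D = {y. count M y \<noteq> count N y}"
    have finD: "finite D"
      by (rule finite_subset[of _ "set_mset M \<union> set_mset N"]) (auto simp: D_def count_eq_zero_iff[symmetric])
    have "M \<noteq> N" using lt by auto
    then have Dne: "D \<noteq> {}" by (auto simp: D_def multiset_eq_iff)
    define x0 where "x0 = Max D"
    have x0D: "x0 \<in> D" using finD Dne x0_def by simp
    have above: "\<And>y. y > x0 \<Longrightarrow> count M y = count N y"
    proof (rule ccontr)
      fix y assume "x0 < y" "count M y \<noteq> count N y"
      then have "y \<in> D" by (simp add: D_def)
      then have "y \<le> x0" using finD x0_def by simp
      then show False using \<open>x0 < y\<close> by simp
    qed
    have HO: "\<forall>y. count N y < count M y \<longrightarrow> (\<exists>x>y. count M x < count N x)"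
      using lt less_multiset\<^sub>H\<^sub>O by blast
    have cx0: "count M x0 < count N x0"
    proof (rule ccontr)
      assume "\<not> ?thesis"
      then have "count N x0 < count M x0" using x0D by (auto simp: D_def)
      then obtain x where "x > x0" "count M x < count N x" using HO by blast
      then show False using above by fastforce
    qed
    then have x0N: "x0 \<in># N" by (metis gr_implies_not0 not_in_iff) 
    have x0b: "x0 \<le> b" using x0N b_def by simp
    have x01: "x0 \<ge> 1" using x0N N0 by (cases x0) auto
    have ab: "a \<le> b"
    proof (rule ccontr)
      assume "\<not> a \<le> b"
      then have "a \<notin># N" using b_def by (metis Max_ge finite_set_mset not_le)
      then have "a \<in> D" using aM by (auto simp: D_def not_in_iff)
      then have "a \<le> x0" using finD x0_def by simp
      then show False using x0b \<open>\<not> a \<le> b\<close> by simp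
    qed
    show ?thesis
    proof (cases "a < b")
      case True then show ?thesis using lenM lenN by (simp add: shortlex_def)
    next
      case False
      then have abe: "a = b" using ab by simp
      define j where "j = b - x0"
      have jb: "j < b" using j_def x01 x0b by simp
      have LM: "\<And>i. i < b \<Longrightarrow> Lc M ! i = count M (b - i)"
        using Mne abe a_def by (simp add: Lc_def rev_nth_aux2 del: upt_Suc)
      have LN: "\<And>i. i < b \<Longrightarrow> Lc N ! i = count N (b - i)"
        using Nne b_def by (simp add: Lc_def rev_nth_aux2 del: upt_Suc)
      have "take j (Lc M) = take j (Lc N)"
      proof (rule nth_equalityI)
        show "length (take j (Lc M)) = length (take j (Lc N))" using lenM lenN abe by simp
      next
        fix i assume "i < length (take j (Lc M))"
        then have i: "i < j" using lenM abe jb by simp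
        then have "b - i > x0" using j_def jb by simp
        then show "take j (Lc M) ! i = take j (Lc N) ! i"
          using i jb LM LN above by simp
      qed
      moreover have "Lc M ! j < Lc N ! j"
        using LM LN jb cx0 j_def x0b by simp
      ultimately show ?thesis using lenM lenN abe jb by (auto simp: shortlex_def)
    qed
  qed
qed

lemma w_pos: "0 < w a" by (induction a) auto

lemma w_unbox: "w (unbox a) \<le> w a" by (cases a) auto

lemma split_unbox: "filter_mset (\<lambda>a. \<not> is_box a) \<Gamma> + image_mset unbox (filter_mset is_box \<Gamma>) = image_mset unbox \<Gamma>"
proof (induction \<Gamma>)
  case empty then show ?case by simp
next
  case (add x \<Gamma>) then show ?case by (cases x) auto
qed

definition mw :: "sequent \<Rightarrow> nat multiset" where
  "mw S = image_mset (\<lambda>a. w (unbox a)) (fst S) + {#w (snd S)#}"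

lemma Theta_mw: "Theta S = Lc (mw S)"
  by (cases S) (simp add: Theta_def split_unbox L_Lc mw_def image_mset.compositionality comp_def)

lemma mw_pos: "0 \<notin># mw S"
  using w_pos by (auto simp: mw_def) (metis less_irrefl)

lemma Gle: "image_mset (\<lambda>a. w (unbox a)) \<Gamma> \<le> image_mset w \<Gamma>"
proof (induction \<Gamma>)
  case empty then show ?case by simp
next
  case (add x \<Gamma>) then show ?case by (simp add: add_mset_le_le_le w_unbox)
qed

lemma le_plus: "(A::nat multiset) \<le> A + B"
  by (metis add.right_neutral add_left_mono less_eq_multiset_empty_left)

lemma Gle2: "image_mset (\<lambda>a. w (unbox a)) \<Gamma> \<le> add_mset x (image_mset w \<Gamma>)"
  using Gle le_multiset_right_total by (metis order.strict_implies_order order.trans)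

lemma step:
  fixes A A' K :: "nat multiset"
  assumes "A \<le> A'" "\<forall>k\<in>#K. k < x" "P = A + K" "Q = A' + {#x#}"
  shows "P < Q"
proof -
  have "A + K \<le> A' + K" using assms(1) by (rule add_right_mono)
  also have "K < {#x#}" using assms(2) by simp
  then have "A' + K < A' + {#x#}" by (rule add_strict_left_mono)
  finally show ?thesis using assms by simp
qed

lemma mw_less:
  assumes "rule ps S0" "S \<in> set ps"
  shows "mw S < mw S0"
  using assms
proof (induction rule: rule.induct)
  case (AndL \<Gamma> \<phi> \<psi> \<chi>)
  then show ?case using w_unbox[of \<phi>] w_unbox[of \<psi>]
    by (intro step[where A="image_mset (\<lambda>a. w (unbox a)) \<Gamma> + {#w \<chi>#}" and A'="image_mset (\<lambda>a. w (unbox a)) \<Gamma> + {#w \<chi>#}"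
       and K="{#w (unbox \<phi>), w (unbox \<psi>)#}" and x="w \<phi> + w \<psi> + 2"])
      (auto simp: mw_def image_mset.compositionality comp_def intro: le_plus add_mono Gle Gle2 order.trans[OF Gle le_plus])
next
  case (AndR \<Gamma> \<phi> \<psi>)
  then show ?case using w_pos
    by (intro step[where A="image_mset (\<lambda>a. w (unbox a)) \<Gamma>" and A'="image_mset (\<lambda>a. w (unbox a)) \<Gamma>"
       and K="if S = (\<Gamma>, \<phi>) then {#w \<phi>#} else {#w \<psi>#}" and x="w \<phi> + w \<psi> + 2"])
      (auto simp: mw_def image_mset.compositionality comp_def intro: le_plus add_mono Gle Gle2 order.trans[OF Gle le_plus])
next
  case (OrL \<phi> \<Gamma> \<chi> \<psi>)
  then show ?case using w_unbox[of \<phi>] w_unbox[of \<psi>]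
    by (intro step[where A="image_mset (\<lambda>a. w (unbox a)) \<Gamma> + {#w \<chi>#}" and A'="image_mset (\<lambda>a. w (unbox a)) \<Gamma> + {#w \<chi>#}"
       and K="if S = (add_mset \<phi> \<Gamma>, \<chi>) then {#w (unbox \<phi>)#} else {#w (unbox \<psi>)#}" and x="w \<phi> + w \<psi> + 1"])
      (auto simp: mw_def image_mset.compositionality comp_def intro: le_plus add_mono Gle Gle2 order.trans[OF Gle le_plus])
next
  case (OrR1 \<Gamma> \<phi> \<psi>)
  then show ?case using w_pos
    by (intro step[where A="image_mset (\<lambda>a. w (unbox a)) \<Gamma>" and A'="image_mset (\<lambda>a. w (unbox a)) \<Gamma>"
       and K="{#w \<phi>#}" and x="w \<phi> + w \<psi> + 1"])
      (auto simp: mw_def image_mset.compositionality comp_def intro: le_plus add_mono Gle Gle2 order.trans[OF Gle le_plus])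
next
  case (OrR2 \<Gamma> \<psi> \<phi>)
  then show ?case using w_pos
    by (intro step[where A="image_mset (\<lambda>a. w (unbox a)) \<Gamma>" and A'="image_mset (\<lambda>a. w (unbox a)) \<Gamma>"
       and K="{#w \<psi>#}" and x="w \<phi> + w \<psi> + 1"])
      (auto simp: mw_def image_mset.compositionality comp_def intro: le_plus add_mono Gle Gle2 order.trans[OF Gle le_plus])
next
  case (pImpL \<Gamma> p \<phi> \<chi>)
  then show ?case using w_unbox[of \<phi>]
    by (intro step[where A="image_mset (\<lambda>a. w (unbox a)) \<Gamma> + {#1, w \<chi>#}" and A'="image_mset (\<lambda>a. w (unbox a)) \<Gamma> + {#1, w \<chi>#}"
       and K="{#w (unbox \<phi>)#}" and x="w \<phi> + 2"])
      (auto simp: mw_def image_mset.compositionality comp_def intro: le_plus add_mono Gle Gle2 order.trans[OF Gle le_plus])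
next
  case (ImpR \<phi> \<Gamma> \<psi>)
  then show ?case using w_unbox[of \<phi>] w_pos
    by (intro step[where A="image_mset (\<lambda>a. w (unbox a)) \<Gamma>" and A'="image_mset (\<lambda>a. w (unbox a)) \<Gamma>"
       and K="{#w (unbox \<phi>), w \<psi>#}" and x="w \<phi> + w \<psi> + 1"])
      (auto simp: mw_def image_mset.compositionality comp_def intro: le_plus add_mono Gle Gle2 order.trans[OF Gle le_plus])
next
  case (BoxImpL \<Phi> \<Gamma> \<psi> \<phi> \<chi>)
  then show ?case using w_unbox[of \<psi>]
    by (intro step[where A="image_mset (\<lambda>a. w (unbox a)) \<Phi> + (if S = (\<Phi> + \<Gamma> + {#\<psi>, Box \<phi>#}, \<phi>) then image_mset (\<lambda>a. w (unbox a)) \<Gamma> else image_mset w \<Gamma> + {#w \<chi>#})" and A'="image_mset (\<lambda>a. w (unbox a)) \<Phi> + image_mset w \<Gamma> + {#w \<chi>#}"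
       and K="if S = (\<Phi> + \<Gamma> + {#\<psi>, Box \<phi>#}, \<phi>) then {#w (unbox \<psi>), w \<phi>, w \<phi>#} else {#w (unbox \<psi>)#}" and x="w \<phi> + w \<psi> + 2"])
      (auto simp: mw_def image_mset.compositionality comp_def intro: le_plus add_mono Gle Gle2 order.trans[OF Gle le_plus])
next
  case (SLtR \<Phi> \<Gamma> \<phi>)
  then show ?case using w_pos
    by (intro step[where A="image_mset (\<lambda>a. w (unbox a)) \<Phi> + image_mset (\<lambda>a. w (unbox a)) \<Gamma>" and A'="image_mset (\<lambda>a. w (unbox a)) \<Phi> + image_mset w \<Gamma>"
       and K="{#w \<phi>, w \<phi>#}" and x="w \<phi> + 1"])
      (auto simp: mw_def image_mset.compositionality comp_def intro: le_plus add_mono Gle Gle2 order.trans[OF Gle le_plus])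
next
  case (AndImpL \<phi> \<psi> \<chi> \<Gamma> \<delta>)
  then show ?case using w_pos
    by (intro step[where A="image_mset (\<lambda>a. w (unbox a)) \<Gamma> + {#w \<delta>#}" and A'="image_mset (\<lambda>a. w (unbox a)) \<Gamma> + {#w \<delta>#}"
       and K="{#w \<phi> + w \<psi> + w \<chi> + 2#}" and x="w \<phi> + w \<psi> + w \<chi> + 3"])
      (auto simp: mw_def image_mset.compositionality comp_def intro: le_plus add_mono Gle Gle2 order.trans[OF Gle le_plus])
next
  case (OrImpL \<Gamma> \<phi> \<chi> \<psi> \<delta>)
  then show ?case using w_pos
    by (intro step[where A="image_mset (\<lambda>a. w (unbox a)) \<Gamma> + {#w \<delta>#}" and A'="image_mset (\<lambda>a. w (unbox a)) \<Gamma> + {#w \<delta>#}"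
       and K="{#w \<phi> + w \<chi> + 1, w \<psi> + w \<chi> + 1#}" and x="w \<phi> + w \<psi> + w \<chi> + 2"])
      (auto simp: mw_def image_mset.compositionality comp_def intro: le_plus add_mono Gle Gle2 order.trans[OF Gle le_plus])
next
  case (ImpImpL \<psi> \<chi> \<Gamma> \<phi> \<delta>)
  then show ?case using w_unbox[of \<chi>] w_pos
    by (intro step[where A="image_mset (\<lambda>a. w (unbox a)) \<Gamma> + (if S = (add_mset \<chi> \<Gamma>, \<delta>) then {#w \<delta>#} else {#})" and A'="image_mset (\<lambda>a. w (unbox a)) \<Gamma> + {#w \<delta>#}"
       and K="if S = (add_mset \<chi> \<Gamma>, \<delta>) then {#w (unbox \<chi>)#} else {#w \<psi> + w \<chi> + 1, w \<phi> + w \<psi> + 1#}" and x="w \<phi> + w \<psi> + w \<chi> + 2"])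
      (auto simp: mw_def image_mset.compositionality comp_def intro: le_plus add_mono Gle Gle2 order.trans[OF Gle le_plus])
qed auto

theorem lemma3:
  assumes "rule ps S0"
      and "S \<in> set ps"
  shows "shortlex (Theta S) (Theta S0)"
  unfolding Theta_mw using mw_less[OF assms] mw_pos[of S] mw_pos[of S0] by (rule Lc_main)

end
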